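(* Let $f:\mathbb{R}^d\to\mathbb{R}$ be twice differentiable with $L$-Lipschitz Hessian. Let $x,g\in\mathbb{R}^d$, $H\in\mathbb{R}^{d\times d}$ symmetric, $M\ge L$, let $x^+$ be a global minimizer of $y\mapsto\Omega_{M,g,H}(y,x)$ and $r:=\|x^+-x\|$. Then $$ \frac{1}{\sqrt{M}}\|\nabla f(x^+)\|^{3/2}\;\le\;3Mr^3+\frac{2}{\sqrt{M}}\|\nabla f(x)-g\|^{3/2}+\frac{1}{M^2}\|\nabla^2 f(x)-H\|^3 . $$
   Context: $\|\cdot\|$ is the Euclidean norm on vectors and the spectral norm on symmetric matrices. The Hessian of $f$ is $L$-Lipschitz means $\|\nabla^2 f(x)-\nabla^2 f(y)\|\le L\|x-y\|$ for all $x,y$. For $M>0$, $g\in\mathbb{R}^d$ and symmetric $H$, $\Omega_{M,g,H}(y,x):=\langle g,y-x\rangle+\frac12\langle H(y-x),y-x\rangle+\frac{M}{6}\|y-x\|^3$. *)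

theory Defs
  imports "HOL-Analysis.Analysis"
begin

definition spec_norm :: "real^'n^'n \<Rightarrow> real" where
  "spec_norm A = onorm (\<lambda>v. A *v v)"

definition Omega :: "real \<Rightarrow> real^'n \<Rightarrow> real^'n^'n \<Rightarrow> real^'n \<Rightarrow> real^'n \<Rightarrow> real" where
  "Omega M g H y x = g \<bullet> (y - x) + (1/2) * ((H *v (y - x)) \<bullet> (y - x)) + (M / 6) * norm (y - x) ^ 3"

end

theory Submission imports Defs begin


lemma cube_deriv:
  fixes y :: "'a::real_inner"
  shows "((\<lambda>z. norm z ^ 3) has_derivative (\<lambda>v. 3 * norm y * (y \<bullet> v))) (at y)"
proof (cases "y = 0")
  case True
  have "((\<lambda>h. norm h ^ 2) \<longlongrightarrow> 0) (at (0::'a))"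
    by (rule tendsto_eq_intros | simp)+
  then have "((\<lambda>h. norm (norm (0 + h) ^ 3 - norm (0::'a) ^ 3 - 0) / norm h) \<longlongrightarrow> 0) (at (0::'a))"
    apply (rule Lim_transform_eventually)
    apply (rule eventually_at_filter[THEN iffD2])
    by (auto simp: power3_eq_cube power2_eq_square)
  then show ?thesis using True
    by (simp add: has_derivative_at bounded_linear_zero)
next
  case False
  note d = has_derivative_power[OF has_derivative_norm[OF False], where n=3]
  have "(\<lambda>ya. of_nat 3 * (ya \<bullet> sgn y) * norm y ^ (3 - 1)) = (\<lambda>v. 3 * norm y * (y \<bullet> v))"
    using False by (auto simp: sgn_div_norm power2_eq_square inner_commute)
  with d show ?thesis by simp
qed


lemma mv_scale: "(A::real^'n^'m) *v (c *\<^sub>R v) = c *\<^sub>R (A *v v)"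
  by (rule matrix_vector_mult_scaleR)

lemma spec_bound: "norm ((A::real^'n^'n) *v v) \<le> spec_norm A * norm v"
  unfolding spec_norm_def by (rule onorm[OF matrix_vector_mul_bounded_linear])

lemma taylor_scalar:
  fixes grad :: "real^'n \<Rightarrow> real^'n" and Hess :: "real^'n \<Rightarrow> real^'n^'n"
  assumes hess: "\<And>z. (grad has_derivative (\<lambda>h. Hess z *v h)) (at z)"
    and lip: "\<And>y z. spec_norm (Hess y - Hess z) \<le> L * norm (y - z)"
  shows "w \<bullet> (grad (x + h) - grad x - Hess x *v h) \<le> (L * norm h ^ 2 / 2) * norm w"
proof -
  define \<phi> where "\<phi> t = w \<bullet> (grad (x + t *\<^sub>R h) - grad x - t *\<^sub>R (Hess x *v h)) - (L * norm h ^ 2 / 2) * norm w * t^2" for t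
  define \<phi>' where "\<phi>' t = w \<bullet> (Hess (x + t *\<^sub>R h) *v h - Hess x *v h) - L * norm h ^ 2 * norm w * t" for t
  have D: "DERIV \<phi> t :> \<phi>' t" for t
  proof -
    have g1: "((\<lambda>t. grad (x + t *\<^sub>R h)) has_derivative (\<lambda>s. Hess (x + t *\<^sub>R h) *v (s *\<^sub>R h))) (at t)"
      by (rule has_derivative_compose[of "\<lambda>t. x + t *\<^sub>R h" _ t UNIV grad, simplified, OF _ hess])
         (rule derivative_eq_intros | simp)+
    have "(\<phi> has_derivative (\<lambda>s. w \<bullet> (Hess (x + t *\<^sub>R h) *v (s *\<^sub>R h) - 0 - s *\<^sub>R (Hess x *v h)) - (L * norm h ^ 2 / 2) * norm w * (of_nat 2 * s * t ^ (2-1)))) (at t)"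
      unfolding \<phi>_def
      by (rule derivative_eq_intros g1 | simp)+
    moreover have "(\<lambda>s. w \<bullet> (Hess (x + t *\<^sub>R h) *v (s *\<^sub>R h) - 0 - s *\<^sub>R (Hess x *v h)) - (L * norm h ^ 2 / 2) * norm w * (of_nat 2 * s * t ^ (2-1))) = (\<lambda>s. s * \<phi>' t)"
      by (auto simp: \<phi>'_def mv_scale algebra_simps inner_diff_right)
    ultimately show ?thesis by (simp add: has_field_derivative_def mult.commute[of _ "\<phi>' t"])
  qed
  have N: "\<phi>' t \<le> 0" if "0 \<le> t" "t \<le> 1" for t
  proof -
    have "w \<bullet> (Hess (x + t *\<^sub>R h) *v h - Hess x *v h) = w \<bullet> ((Hess (x + t *\<^sub>R h) - Hess x) *v h)"
      by (simp add: matrix_vector_mult_diff_rdistrib)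
    also have "\<dots> \<le> norm w * norm ((Hess (x + t *\<^sub>R h) - Hess x) *v h)"
      by (rule norm_cauchy_schwarz)
    also have "\<dots> \<le> norm w * (spec_norm (Hess (x + t *\<^sub>R h) - Hess x) * norm h)"
      by (rule mult_left_mono[OF spec_bound norm_ge_zero])
    also have "\<dots> \<le> norm w * ((L * (t * norm h)) * norm h)"
      using lip[of "x + t *\<^sub>R h" x] that
      by (intro mult_left_mono mult_right_mono) auto
    finally show ?thesis by (simp add: \<phi>'_def power2_eq_square algebra_simps)
  qed
  have "\<phi> 1 \<le> \<phi> 0"
    by (rule DERIV_nonpos_imp_nonincreasing[of 0 1 \<phi>]) (use D N in auto)
  then show ?thesis by (simp add: \<phi>_def)
qed


lemma arith_key:
  fixes T A B D :: real
  assumes "0 \<le> T" "0 \<le> A" "0 \<le> B" "0 \<le> D" "T^2 \<le> A^2 + B^2 + A*D"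
  shows "T^3 \<le> 3*A^3 + 2*B^3 + D^3"
proof -
  have y: "T * X^2 \<le> T^3/12 + 4/3 * X^3" if "0 \<le> X" for X
  proof -
    have "0 \<le> (T - 2*X)^2 * (T + 4*X)" using that assms by simp
    then show ?thesis by (simp add: power2_eq_square power3_eq_cube algebra_simps)
  qed
  have "A*D \<le> A^2/2 + D^2/2" proof -
    have "0 \<le> (A - D)^2" by simp
    then show ?thesis by (simp add: power2_eq_square algebra_simps)
  qed
  then have "T^2 \<le> 3/2*A^2 + B^2 + 1/2*D^2" using assms by linarith
  then have "T * T^2 \<le> T * (3/2*A^2 + B^2 + 1/2*D^2)" using assms by (intro mult_left_mono) auto
  also have "\<dots> = 3/2*(T*A^2) + T*B^2 + 1/2*(T*D^2)" by (simp add: algebra_simps)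
  also have "\<dots> \<le> 3/2*(T^3/12 + 4/3 * A^3) + (T^3/12 + 4/3 * B^3) + 1/2*(T^3/12 + 4/3 * D^3)"
    using y[OF assms(2)] y[OF assms(3)] y[OF assms(4)] by (intro add_mono mult_left_mono) auto
  finally have "T^3 \<le> 3/2*(T^3/12 + 4/3 * A^3) + (T^3/12 + 4/3 * B^3) + 1/2*(T^3/12 + 4/3 * D^3)"
    by (simp add: power3_eq_cube power2_eq_square)
  then have "T^3 \<le> (T^3/4 + 4*A^3)/2 + (T^3/12 + 4*B^3/3) + (T^3/12 + 4*D^3/3)/2" by simp
  moreover have "\<And>t a b d::real. t \<le> (t/4+4*a)/2 + (t/12+4*b/3)+(t/12+4*d/3)/2 \<Longrightarrow> 0\<le>a \<Longrightarrow> 0\<le>b \<Longrightarrow> 0\<le>d \<Longrightarrow> t \<le> 3*a+2*b+d"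
    by (simp add: field_simps)
  ultimately show ?thesis using assms by simp
qed

lemma sym_inner:
  fixes H :: "real^'n^'n"
  assumes "transpose H = H"
  shows "(H *v v) \<bullet> h = (H *v h) \<bullet> v"
proof -
  have "(H *v v) \<bullet> h = h \<bullet> (H *v v)" by (simp add: inner_commute)
  also have "\<dots> = (h v* H) \<bullet> v" by (simp add: dot_lmul_matrix)
  also have "h v* H = H *v h" using vector_transpose_matrix[of h H] assms by simp
  finally show ?thesis .
qed

lemma omega_deriv:
  fixes H :: "real^'n^'n"
  assumes "transpose H = H"
  shows "((\<lambda>y. Omega M g H y x) has_derivative (\<lambda>v. (g + H *v (y - x) + (M/2 * norm (y - x)) *\<^sub>R (y - x)) \<bullet> v)) (at y)"
proof -
  have c: "((\<lambda>y. norm (y - x) ^ 3) has_derivative (\<lambda>v. 3 * norm (y - x) * ((y - x) \<bullet> (v - 0)))) (at y)"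
    by (rule has_derivative_compose[of "\<lambda>y. y - x" _ y UNIV "\<lambda>z. norm z ^ 3", simplified, OF _ cube_deriv])
       (rule derivative_eq_intros | simp)+
  have m: "((\<lambda>y. H *v (y - x)) has_derivative (\<lambda>v. H *v (v - 0))) (at y)"
    by (rule bounded_linear.has_derivative[OF matrix_vector_mul_bounded_linear])
       (rule derivative_eq_intros | simp)+
  have "((\<lambda>y. Omega M g H y x) has_derivative (\<lambda>v. g \<bullet> (v - 0) + (1/2) * ((H *v (y - x)) \<bullet> (v - 0) + (H *v (v - 0)) \<bullet> (y - x)) + (M/6) * (3 * norm (y - x) * ((y - x) \<bullet> (v - 0))))) (at y)"
    unfolding Omega_def
    by (rule derivative_eq_intros c m | simp)+
  moreover have "(\<lambda>v. g \<bullet> (v - 0) + (1/2) * ((H *v (y - x)) \<bullet> (v - 0) + (H *v (v - 0)) \<bullet> (y - x)) + (M/6) * (3 * norm (y - x) * ((y - x) \<bullet> (v - 0))))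
     = (\<lambda>v. (g + H *v (y - x) + (M/2 * norm (y - x)) *\<^sub>R (y - x)) \<bullet> v)"
    using sym_inner[OF assms] by (auto simp: inner_add_left algebra_simps)
  ultimately show ?thesis by simp
qed

lemma p32: "0 \<le> (u::real) \<Longrightarrow> u powr (3/2) = sqrt u ^ 3"
proof -
  assume u: "0 \<le> u"
  have "sqrt u ^ 3 = (u powr (1/2)) ^ 3" using powr_half_sqrt[OF u] by simp
  also have "\<dots> = (u powr (1/2)) powr 3" by simp
  also have "\<dots> = u powr (3/2)" by (simp add: powr_powr)
  finally show ?thesis by simp
qed

theorem mainTheorem2:
  fixes f :: "real^'n \<Rightarrow> real"
    and grad :: "real^'n \<Rightarrow> real^'n"
    and Hess :: "real^'n \<Rightarrow> real^'n^'n"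
    and L M :: real and x g xp :: "real^'n" and H :: "real^'n^'n"
  assumes grad: "\<And>z. (f has_derivative (\<lambda>h. grad z \<bullet> h)) (at z)"
    and hess: "\<And>z. (grad has_derivative (\<lambda>h. Hess z *v h)) (at z)"
    and lip: "\<And>y z. spec_norm (Hess y - Hess z) \<le> L * norm (y - z)"
    and symH: "transpose H = H"
    and Mpos: "M > 0" and M_ge_L: "M \<ge> L"
    and minim: "\<And>y. Omega M g H xp x \<le> Omega M g H y x"
  shows "(1 / sqrt M) * norm (grad xp) powr (3/2)
     \<le> 3 * M * norm (xp - x) ^ 3 + (2 / sqrt M) * norm (grad x - g) powr (3/2)
        + (1 / M^2) * spec_norm (Hess x - H) ^ 3"
proof -
  define h where "h = xp - x"
  define r where "r = norm h"
  define w where "w = g + H *v h + (M/2 * r) *\<^sub>R h"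
  define \<delta> where "\<delta> = norm (grad x - g)"
  define \<sigma> where "\<sigma> = spec_norm (Hess x - H)"
  have "(\<lambda>v. w \<bullet> v) = (\<lambda>v. 0)"
    using differential_zero_maxmin[of xp UNIV "\<lambda>y. Omega M g H y x", OF _ _ omega_deriv[OF symH, of M g x xp]] minim
    unfolding w_def h_def r_def by auto
  then have "w \<bullet> w = 0" by metis
  then have w0: "w = 0" by simp
  define v0 where "v0 = grad xp - grad x - Hess x *v h"
  have t: "v0 \<bullet> v0 \<le> (L * r^2/2) * norm v0"
    using taylor_scalar[OF hess lip, of v0 x h] unfolding v0_def h_def r_def by simp
  have n0: "norm v0 \<le> M * r^2/2"
  proof (cases "norm v0 = 0")
    case True then show ?thesis using Mpos by simp
  next
    case False
    have "norm v0 * norm v0 \<le> (L * r^2/2) * norm v0" using t by (simp add: power2_norm_eq_inner[symmetric] power2_eq_square)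
    then have "norm v0 \<le> L * r^2/2" using False by simp
    also have "\<dots> \<le> M * r^2/2" using M_ge_L by (simp add: mult_right_mono divide_right_mono)
    finally show ?thesis .
  qed
  have gdef: "g = - (H *v h) - (M/2 * r) *\<^sub>R h" using w0 unfolding w_def by (simp add: algebra_simps eq_neg_iff_add_eq_0)
  have eq: "grad xp = v0 + (grad x - g) + (Hess x - H) *v h - (M/2*r) *\<^sub>R h"
    unfolding v0_def gdef by (simp add: algebra_simps matrix_vector_mult_diff_rdistrib)
  have hs: "norm ((Hess x - H) *v h) \<le> \<sigma> * r" unfolding \<sigma>_def r_def by (rule spec_bound)
  have hr: "norm ((M/2*r) *\<^sub>R h) = M/2*r*r" using Mpos unfolding r_def by simp
  have N: "norm (grad xp) \<le> M*r^2 + \<delta> + \<sigma>*r"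
  proof -
    have "norm (grad xp) \<le> norm v0 + norm (grad x - g) + norm ((Hess x - H) *v h) + norm ((M/2*r) *\<^sub>R h)"
    proof -
      have 1: "norm (v0 + (grad x - g) + (Hess x - H) *v h - (M/2*r) *\<^sub>R h) \<le> norm (v0 + (grad x - g) + (Hess x - H) *v h) + norm ((M/2*r) *\<^sub>R h)"
        by (rule norm_triangle_ineq4)
      have 2: "norm (v0 + (grad x - g) + (Hess x - H) *v h) \<le> norm (v0 + (grad x - g)) + norm ((Hess x - H) *v h)"
        by (rule norm_triangle_ineq)
      have 3: "norm (v0 + (grad x - g)) \<le> norm v0 + norm (grad x - g)"
        by (rule norm_triangle_ineq)
      show ?thesis unfolding eq using 1 2 3 by linarith
    qed
    then show ?thesis using n0 hs hr unfolding \<delta>_def by (simp add: power2_eq_square)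
  qed
  define m where "m = sqrt M"
  have m0: "m > 0" using Mpos unfolding m_def by simp
  have mM: "m^2 = M" using Mpos unfolding m_def by simp
  define T where "T = sqrt (norm (grad xp))"
  define A where "A = m * r"
  define B where "B = sqrt \<delta>"
  define D where "D = \<sigma> / m"
  have r0: "0 \<le> r" unfolding r_def by simp
  have \<sigma>0: "0 \<le> \<sigma>" unfolding \<sigma>_def spec_norm_def by (rule onorm_pos_le[OF matrix_vector_mul_bounded_linear])
  have \<delta>0: "0 \<le> \<delta>" unfolding \<delta>_def by simp
  have key: "T^3 \<le> 3*A^3 + 2*B^3 + D^3"
  proof (rule arith_key)
    show "0 \<le> T" "0 \<le> A" "0 \<le> B" "0 \<le> D" unfolding T_def A_def B_def D_def using m0 r0 \<sigma>0 \<delta>0 by auto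
    have "A^2 + B^2 + A*D = M*r^2 + \<delta> + \<sigma>*r" unfolding A_def B_def D_def using m0 mM \<delta>0
      by (simp add: power_mult_distrib)
    then show "T^2 \<le> A^2 + B^2 + A*D" using N unfolding T_def by simp
  qed
  have lhs: "(1 / sqrt M) * norm (grad xp) powr (3/2) = T^3 / m"
    unfolding T_def m_def by (simp add: p32)
  have rhs: "3 * M * norm (xp - x) ^ 3 + (2 / sqrt M) * norm (grad x - g) powr (3/2)
        + (1 / M^2) * spec_norm (Hess x - H) ^ 3 = (3*A^3 + 2*B^3 + D^3) / m"
  proof -
    have "3 * M * r ^ 3 = 3*A^3/m" unfolding A_def using m0 mM[symmetric]
      by (simp add: power_mult_distrib power2_eq_square power3_eq_cube)
    moreover have "(2 / m) * \<delta> powr (3/2) = 2*B^3/m" unfolding B_def using \<delta>0 by (simp add: p32)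
    moreover have "(1 / M^2) * \<sigma> ^ 3 = D^3/m" unfolding D_def using m0 mM[symmetric]
      by (simp add: power_divide power2_eq_square power3_eq_cube field_simps)
    ultimately show ?thesis unfolding r_def h_def \<delta>_def \<sigma>_def m_def by (simp add: add_divide_distrib)
  qed
  show ?thesis unfolding lhs rhs using key m0 by (simp add: divide_right_mono)
qed
end
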